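(* For every integer $k\ge1$, $$t^+_k(2)=\tfrac16\left(2^k-(-1)^k\left(1+(-3)^{\lceil k/2\rceil}\right)\right),\qquad t^-_k(2)=\tfrac16\left(2^k-(-1)^k\left(1-(-3)^{\lceil k/2\rceil}\right)\right).$$
   Context: $T_\pm$ is a directed graph on three vertices $x_0,x_1,x_2$ (a triangle) with both arcs between each pair; the clockwise arcs $x_0\to x_1$, $x_1\to x_2$, $x_2\to x_0$ have sign $+$ and the reverse (counterclockwise) arcs have sign $-$. A walk is positive (negative) if the product of the signs of its arcs is $+$ ($-$). For vertices $x,y$ such that the clockwise path from $x$ to $y$ has length $2$ (i.e. $y\to x$ is a clockwise arc), $t^+_k(2)$ (resp. $t^-_k(2)$) is the number of positive (resp. negative) walks of length $k$ from $x$ to $y$. *)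

theory Defs
  imports Complex_Main
begin

text \<open>Vertices x_0, x_1, x_2 are the naturals 0, 1, 2.
  There is an arc between every pair of distinct vertices (in both directions);
  the clockwise arc a -> (a+1) mod 3 has sign +1, the counterclockwise arc
  a -> (a+2) mod 3 has sign -1.\<close>

definition T_vertices :: "nat set" where
  "T_vertices = {0, 1, 2}"

definition T_arc :: "nat \<Rightarrow> nat \<Rightarrow> bool" where
  "T_arc a b \<longleftrightarrow> a \<in> T_vertices \<and> b \<in> T_vertices \<and> a \<noteq> b"

definition T_sign :: "nat \<Rightarrow> nat \<Rightarrow> int" where
  "T_sign a b = (if b = (a + 1) mod 3 then 1 else -1)"

definition T_walks :: "nat \<Rightarrow> nat \<Rightarrow> nat \<Rightarrow> nat list set" where
  "T_walks k x y = {ws. length ws = Suc k \<and> ws ! 0 = x \<and> ws ! k = y \<and>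
      (\<forall>i<k. T_arc (ws ! i) (ws ! Suc i))}"

definition walk_sign :: "nat list \<Rightarrow> int" where
  "walk_sign ws = (\<Prod>i<length ws - 1. T_sign (ws ! i) (ws ! Suc i))"

definition t_plus :: "nat \<Rightarrow> nat \<Rightarrow> nat \<Rightarrow> nat" where
  "t_plus k x y = card {ws \<in> T_walks k x y. walk_sign ws = 1}"

definition t_minus :: "nat \<Rightarrow> nat \<Rightarrow> nat \<Rightarrow> nat" where
  "t_minus k x y = card {ws \<in> T_walks k x y. walk_sign ws = -1}"

end

theory Submission
  imports Defs
begin

fun cnt :: "nat \<Rightarrow> nat \<Rightarrow> int \<Rightarrow> int" where
  "cnt 0 d s = (if d = 0 \<and> s = 1 then 1 else 0)"
| "cnt (Suc k) d s = cnt k ((d+2) mod 3) s + cnt k ((d+1) mod 3) (-s)"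

lemma walks_last: "vs \<in> T_walks k x z \<Longrightarrow> vs \<noteq> [] \<and> last vs = z"
proof -
  assume "vs \<in> T_walks k x z"
  hence l: "length vs = Suc k" and n: "vs ! k = z" by (auto simp: T_walks_def)
  hence ne: "vs \<noteq> []" by auto
  have "last vs = vs ! (length vs - 1)" using ne by (rule last_conv_nth)
  thus ?thesis using l n ne by simp
qed

lemma walks_Suc:
  "ws \<in> T_walks (Suc k) x y \<longleftrightarrow> (\<exists>vs z. ws = vs @ [y] \<and> vs \<in> T_walks k x z \<and> T_arc z y)"
proof
  assume h: "ws \<in> T_walks (Suc k) x y"
  hence len: "length ws = Suc (Suc k)" by (simp add: T_walks_def)
  define vs where "vs = butlast ws"
  have ne: "ws \<noteq> []" using len by auto
  have lst: "last ws = y" using h len ne by (simp add: T_walks_def last_conv_nth)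
  have ws: "ws = vs @ [y]" unfolding vs_def using append_butlast_last_id[OF ne] lst by simp
  have lv: "length vs = Suc k" using len vs_def by simp
  have nth: "\<And>i. i < Suc k \<Longrightarrow> ws ! i = vs ! i" using ws lv by (simp add: nth_append)
  have "vs \<in> T_walks k x (vs ! k)" using h lv nth unfolding T_walks_def
    by (auto) (metis Suc_mono less_SucI nth)
  moreover have "T_arc (ws ! k) (ws ! Suc k)" using h unfolding T_walks_def by blast
  hence "T_arc (vs ! k) y" using nth[of k] ws lv by (simp add: nth_append)
  ultimately show "\<exists>vs z. ws = vs @ [y] \<and> vs \<in> T_walks k x z \<and> T_arc z y" using ws by blast
next
  assume "\<exists>vs z. ws = vs @ [y] \<and> vs \<in> T_walks k x z \<and> T_arc z y"
  then obtain vs z where ws: "ws = vs @ [y]" and v: "vs \<in> T_walks k x z" and a: "T_arc z y" by blast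
  have lv: "length vs = Suc k" using v by (simp add: T_walks_def)
  show "ws \<in> T_walks (Suc k) x y"
    unfolding T_walks_def
  proof (intro CollectI conjI allI impI)
    show "length ws = Suc (Suc k)" using ws lv by simp
    show "ws ! 0 = x" using ws lv v by (simp add: nth_append T_walks_def)
    show "ws ! Suc k = y" using ws lv by (simp add: nth_append)
    fix i assume i: "i < Suc k"
    show "T_arc (ws ! i) (ws ! Suc i)"
    proof (cases "i < k")
      case True thus ?thesis using v ws lv by (simp add: nth_append T_walks_def)
    next
      case False hence "i = k" using i by simp
      thus ?thesis using v ws lv a by (simp add: nth_append T_walks_def)
    qed
  qed
qed

lemma sign_snoc:
  assumes "length vs = Suc k"
  shows "walk_sign (vs @ [y]) = walk_sign vs * T_sign (vs ! k) y"
proof -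
  have "walk_sign (vs @ [y]) = (\<Prod>i<Suc k. T_sign ((vs@[y]) ! i) ((vs@[y]) ! Suc i))"
    using assms by (simp add: walk_sign_def)
  also have "\<dots> = (\<Prod>i<k. T_sign (vs ! i) (vs ! Suc i)) * T_sign (vs ! k) y"
    using assms by (simp add: nth_append)
  finally show ?thesis using assms by (simp add: walk_sign_def)
qed

lemma finite_walks: "finite (T_walks k x y)"
proof -
  have "T_walks k x y \<subseteq> {ws. set ws \<subseteq> insert x (insert y T_vertices) \<and> length ws = Suc k}"
  proof
    fix ws assume h: "ws \<in> T_walks k x y"
    have "\<forall>i<length ws. ws ! i \<in> insert x (insert y T_vertices)"
    proof (intro allI impI)
      fix i assume i: "i < length ws"
      show "ws ! i \<in> insert x (insert y T_vertices)"
      proof (cases "i < k")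
        case True thus ?thesis using h by (auto simp: T_walks_def T_arc_def)
      next
        case False hence "i = k" using i h by (simp add: T_walks_def)
        thus ?thesis using h by (simp add: T_walks_def)
      qed
    qed
    thus "ws \<in> {ws. set ws \<subseteq> insert x (insert y T_vertices) \<and> length ws = Suc k}"
      using h by (auto simp: T_walks_def in_set_conv_nth)
  qed
  moreover have "finite {ws. set ws \<subseteq> insert x (insert y T_vertices) \<and> length ws = Suc k}"
    by (rule finite_lists_length_eq) (simp add: T_vertices_def)
  ultimately show ?thesis by (rule finite_subset)
qed

definition C :: "nat \<Rightarrow> nat \<Rightarrow> nat \<Rightarrow> int \<Rightarrow> nat list set" where
  "C k x y s = {ws \<in> T_walks k x y. walk_sign ws = s}"

lemma C_Suc:
  assumes y: "y \<in> T_vertices" and s: "s = 1 \<or> s = -1"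
  shows "C (Suc k) x y s = (\<lambda>vs. vs @ [y]) ` (C k x ((y+2) mod 3) s \<union> C k x ((y+1) mod 3) (-s))"
proof -
  have arc: "\<And>z. T_arc z y \<longleftrightarrow> z = (y+2) mod 3 \<or> z = (y+1) mod 3"
    using y by (auto simp: T_arc_def T_vertices_def)
  have sg1: "T_sign ((y+2) mod 3) y = 1" using y by (auto simp: T_sign_def T_vertices_def)
  have sg2: "T_sign ((y+1) mod 3) y = -1" using y by (auto simp: T_sign_def T_vertices_def)
  have lenw: "\<And>vs k x z. vs \<in> T_walks k x z \<Longrightarrow> length vs = Suc k \<and> vs ! k = z"
    by (simp add: T_walks_def)
  show ?thesis
  proof (intro set_eqI iffI)
    fix ws assume "ws \<in> C (Suc k) x y s"
    then have w: "ws \<in> T_walks (Suc k) x y" and sw: "walk_sign ws = s" by (auto simp: C_def)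
    then obtain vs z where ws: "ws = vs @ [y]" and v: "vs \<in> T_walks k x z" and a: "T_arc z y"
      using walks_Suc by blast
    have sg: "walk_sign ws = walk_sign vs * T_sign z y" using ws lenw[OF v] sign_snoc by metis
    from a arc have "z = (y+2) mod 3 \<or> z = (y+1) mod 3" by blast
    thus "ws \<in> (\<lambda>vs. vs @ [y]) ` (C k x ((y+2) mod 3) s \<union> C k x ((y+1) mod 3) (-s))"
    proof
      assume "z = (y+2) mod 3" thus ?thesis using sg sg1 sw ws v by (auto simp: C_def)
    next
      assume "z = (y+1) mod 3" thus ?thesis using sg sg2 sw ws v by (auto simp: C_def)
    qed
  next
    fix ws assume "ws \<in> (\<lambda>vs. vs @ [y]) ` (C k x ((y+2) mod 3) s \<union> C k x ((y+1) mod 3) (-s))"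
    then obtain vs where ws: "ws = vs @ [y]" and
      h: "vs \<in> C k x ((y+2) mod 3) s \<or> vs \<in> C k x ((y+1) mod 3) (-s)" by blast
    from h show "ws \<in> C (Suc k) x y s"
    proof
      assume "vs \<in> C k x ((y+2) mod 3) s"
      hence v: "vs \<in> T_walks k x ((y+2) mod 3)" and sv: "walk_sign vs = s" by (auto simp: C_def)
      have "ws \<in> T_walks (Suc k) x y" using walks_Suc ws v arc by blast
      moreover have "walk_sign ws = s" using sign_snoc[OF conjunct1[OF lenw[OF v]]] lenw[OF v] ws sg1 sv by simp
      ultimately show ?thesis by (simp add: C_def)
    next
      assume "vs \<in> C k x ((y+1) mod 3) (-s)"
      hence v: "vs \<in> T_walks k x ((y+1) mod 3)" and sv: "walk_sign vs = -s" by (auto simp: C_def)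
      have "ws \<in> T_walks (Suc k) x y" using walks_Suc ws v arc by blast
      moreover have "walk_sign ws = s" using sign_snoc[OF conjunct1[OF lenw[OF v]]] lenw[OF v] ws sg2 sv by simp
      ultimately show ?thesis by (simp add: C_def)
    qed
  qed
qed

lemma card_C_Suc:
  assumes y: "y \<in> T_vertices" and s: "s = 1 \<or> s = -1"
  shows "card (C (Suc k) x y s) = card (C k x ((y+2) mod 3) s) + card (C k x ((y+1) mod 3) (-s))"
proof -
  have fin: "\<And>z t. finite (C k x z t)" using finite_walks by (simp add: C_def)
  have dis: "C k x ((y+2) mod 3) s \<inter> C k x ((y+1) mod 3) (-s) = {}"
  proof -
    have "(y+2) mod 3 \<noteq> (y+1) mod 3" by presburger
    have "\<And>vs. vs \<in> T_walks k x ((y+2) mod 3) \<Longrightarrow> vs \<in> T_walks k x ((y+1) mod 3) \<Longrightarrow> False"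
    proof -
      fix vs assume a1: "vs \<in> T_walks k x ((y+2) mod 3)" and a2: "vs \<in> T_walks k x ((y+1) mod 3)"
      from walks_last[OF a1] walks_last[OF a2] \<open>(y+2) mod 3 \<noteq> (y+1) mod 3\<close> show False by simp
    qed
    thus ?thesis unfolding C_def by blast
  qed
  have "card (C (Suc k) x y s) = card (C k x ((y+2) mod 3) s \<union> C k x ((y+1) mod 3) (-s))"
    unfolding C_Suc[OF y s] by (rule card_image) (simp add: inj_on_def)
  also have "\<dots> = card (C k x ((y+2) mod 3) s) + card (C k x ((y+1) mod 3) (-s))"
    by (rule card_Un_disjoint[OF fin fin dis])
  finally show ?thesis .
qed

lemma C_0: "C 0 x y s = (if x = y \<and> s = 1 then {[x]} else {})"
proof -
  have "T_walks 0 x y = (if x = y then {[x]} else {})"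
    by (auto simp: T_walks_def length_Suc_conv)
  thus ?thesis by (auto simp: C_def walk_sign_def)
qed

lemma card_cnt:
  assumes "x \<in> T_vertices" "y \<in> T_vertices" "s = 1 \<or> s = -1"
  shows "int (card (C k x y s)) = cnt k ((y + 3 - x) mod 3) s"
  using assms(2,3)
proof (induction k arbitrary: y s)
  case 0
  thus ?case using assms(1) by (auto simp: C_0 T_vertices_def)
next
  case (Suc k)
  have v1: "(y+2) mod 3 \<in> T_vertices" "(y+1) mod 3 \<in> T_vertices" by (auto simp: T_vertices_def)
  have s2: "-s = 1 \<or> -s = -1" using Suc.prems by auto
  have "int (card (C (Suc k) x y s)) = cnt k (((y+2) mod 3 + 3 - x) mod 3) s + cnt k (((y+1) mod 3 + 3 - x) mod 3) (-s)"
    using card_C_Suc[OF Suc.prems] Suc.IH[OF v1(1) Suc.prems(2)] Suc.IH[OF v1(2) s2] by simp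
  also have "\<dots> = cnt (Suc k) ((y + 3 - x) mod 3) s"
    using assms(1) Suc.prems(1) by (auto simp: T_vertices_def numeral_2_eq_2)
  finally show ?case .
qed

definition OddF :: "nat \<Rightarrow> int \<Rightarrow> bool" where
  "OddF m s \<longleftrightarrow>
   6 * cnt (2*m+1) 0 s = 2^(2*m+1) - 2 \<and>
   6 * cnt (2*m+1) 1 s = 2^(2*m+1) + 1 + 3 * s * (-3)^m \<and>
   6 * cnt (2*m+1) 2 s = 2^(2*m+1) + 1 - 3 * s * (-3)^m"

definition EvenF :: "nat \<Rightarrow> int \<Rightarrow> bool" where
  "EvenF m s \<longleftrightarrow>
   6 * cnt (2*m+2) 0 s = 2^(2*m+2) + 2 - 6 * s * (-3)^m \<and>
   6 * cnt (2*m+2) 1 s = 2^(2*m+2) - 1 + 3 * s * (-3)^m \<and>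
   6 * cnt (2*m+2) 2 s = 2^(2*m+2) - 1 + 3 * s * (-3)^m"

lemma odd0: "s = 1 \<or> s = -1 \<Longrightarrow> OddF 0 s"
  by (auto simp: OddF_def)

lemma odd_even: assumes "OddF m s" "OddF m (-s)" shows "EvenF m s"
proof -
  have e: "\<And>d s. cnt (2*m+2) d s = cnt (2*m+1) ((d+2) mod 3) s + cnt (2*m+1) ((d+1) mod 3) (-s)"
    by (simp add: numeral_2_eq_2)
  have p: "(2::int)^(2*m+2) = 2 * 2^(2*m+1)" by simp
  show ?thesis using assms unfolding EvenF_def OddF_def e p
    by (simp add: algebra_simps)
qed

lemma even_odd: assumes "EvenF m s" "EvenF m (-s)" shows "OddF (Suc m) s"
proof -
  have e: "\<And>d s. cnt (2*Suc m+1) d s = cnt (2*m+2) ((d+2) mod 3) s + cnt (2*m+2) ((d+1) mod 3) (-s)"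
    by (simp add: numeral_2_eq_2)
  have p: "(2::int)^(2*Suc m+1) = 2 * 2^(2*m+2)" by simp
  have q: "(-3::int)^(Suc m) = -3 * (-3)^m" by simp
  show ?thesis using assms unfolding EvenF_def OddF_def e p q
    by (simp add: algebra_simps)
qed

lemma closed: "s = 1 \<or> s = -1 \<Longrightarrow> OddF m s \<and> EvenF m s"
proof (induction m arbitrary: s)
  case 0
  have s2: "-s = 1 \<or> -s = -1" using 0 by auto
  show ?case using odd0[OF 0] odd0[OF s2] odd_even by simp
next
  case (Suc m)
  have s2: "-s = 1 \<or> -s = -1" using Suc.prems by auto
  have o1: "OddF (Suc m) s" using Suc.IH[OF Suc.prems] Suc.IH[OF s2] even_odd by simp
  have o2: "OddF (Suc m) (-s)" using Suc.IH[OF Suc.prems] Suc.IH[OF s2] even_odd[of m "-s"] by simp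
  show ?case using o1 o2 odd_even by simp
qed

theorem lemma13:
  fixes k x y :: nat
  assumes "k \<ge> 1" and "x \<in> T_vertices" and "y = (x + 2) mod 3"
  shows "real (t_plus k x y) =
           (2 ^ k - (-1) ^ k * (1 + (-3) ^ nat \<lceil>real k / 2\<rceil>)) / 6 \<and>
         real (t_minus k x y) =
           (2 ^ k - (-1) ^ k * (1 - (-3) ^ nat \<lceil>real k / 2\<rceil>)) / 6"
proof -
  have yv: "y \<in> T_vertices" using assms(3) by (auto simp: T_vertices_def)
  have d: "(y + 3 - x) mod 3 = 2" using assms(2,3) by (auto simp: T_vertices_def)
  have tp: "int (t_plus k x y) = cnt k 2 1"
    using card_cnt[OF assms(2) yv, of 1 k] d by (simp add: t_plus_def C_def)
  have tm: "int (t_minus k x y) = cnt k 2 (-1)"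
    using card_cnt[OF assms(2) yv, of "-1" k] d by (simp add: t_minus_def C_def)
  have rp: "real (t_plus k x y) = real_of_int (cnt k 2 1)" using arg_cong[OF tp, of real_of_int] by simp
  have rm: "real (t_minus k x y) = real_of_int (cnt k 2 (-1))" using arg_cong[OF tm, of real_of_int] by simp
  have "\<exists>m. k = 2*m+1 \<or> k = 2*m+2" using assms(1) by presburger
  then obtain m where k: "k = 2*m+1 \<or> k = 2*m+2" by blast
  from k show ?thesis
  proof
    assume k: "k = 2*m+1"
    have c: "nat \<lceil>real k / 2\<rceil> = m + 1"
    proof -
      have "real k / 2 = real m + 1/2" using k by simp
      hence "\<lceil>real k / 2\<rceil> = int m + 1" by (simp add: ceiling_eq_iff)
      thus ?thesis by simp
    qed
    have h1: "6 * cnt k 2 1 = 2^k + 1 - 3 * (-3)^m" and h2: "6 * cnt k 2 (-1) = 2^k + 1 + 3 * (-3)^m"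
      using closed[of 1 m] closed[of "-1" m] k unfolding OddF_def by auto
    have h1': "6 * real_of_int (cnt k 2 1) = 2^k + 1 - 3 * (-3)^m"
      using arg_cong[OF h1, of real_of_int] by simp
    have h2': "6 * real_of_int (cnt k 2 (-1)) = 2^k + 1 + 3 * (-3)^m"
      using arg_cong[OF h2, of real_of_int] by simp
    have pm: "(-1::real)^k = -1" using k by simp
    show ?thesis unfolding rp rm c pm using h1' h2' by (simp add: field_simps)
  next
    assume k: "k = 2*m+2"
    have c: "nat \<lceil>real k / 2\<rceil> = m + 1"
    proof -
      have "real k / 2 = real (m + 1)" using k by simp
      hence "\<lceil>real k / 2\<rceil> = int (m + 1)" by (simp only: ceiling_of_nat)
      hence "\<lceil>real k / 2\<rceil> = int m + 1" by simp
      thus ?thesis by simp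
    qed
    have h1: "6 * cnt k 2 1 = 2^k - 1 + 3 * (-3)^m" and h2: "6 * cnt k 2 (-1) = 2^k - 1 - 3 * (-3)^m"
      using closed[of 1 m] closed[of "-1" m] k unfolding EvenF_def by auto
    have h1': "6 * real_of_int (cnt k 2 1) = 2^k - 1 + 3 * (-3)^m"
      using arg_cong[OF h1, of real_of_int] by simp
    have h2': "6 * real_of_int (cnt k 2 (-1)) = 2^k - 1 - 3 * (-3)^m"
      using arg_cong[OF h2, of real_of_int] by simp
    have pm: "(-1::real)^k = 1" using k by simp
    show ?thesis unfolding rp rm c pm using h1' h2' by (simp add: field_simps)
  qed
qed

end
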